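(* Every finitely-generated $\underline{\mathbb Z/2}$-module $M$ (i.e. with $M_\Theta$ and $M_\bullet$ finite-dimensional) is isomorphic to a direct sum of copies of $H$, $H^{op}$, $F$, $S_\bullet$ and $S_\Theta$. The number of summands of each type is uniquely determined: letting $f$ be the rank of $1+t\colon M_\Theta\to M_\Theta$, the number of $F$ summands is $f$; the number of $H^{op}$ summands is $\dim M_\Theta-f-\dim\ker p_*$; the number of $H$ summands is $\dim M_\bullet-\dim\ker p^*-f$; the number of $S_\bullet$ summands is $\dim\ker p^*-\dim M_\Theta+f+\dim\ker p_*$; and the number of $S_\Theta$ summands is $\dim\ker p_*-\dim M_\bullet+\dim\ker p^*$.
   Context: A $\underline{\mathbb Z/2}$-module is a pair of $\mathbb F_2$-vector spaces $M_\Theta,M_\bullet$ with linear maps $t\colon M_\Theta\to M_\Theta$, $p^*\colon M_\bullet\to M_\Theta$, $p_*\colon M_\Theta\to M_\bullet$ satisfying $tp^*=p^*$, $p_*t=p_*$, $t^2=1$, $p^*p_*=1+t$ and $p_*p^*=0$; dimensions are over $\mathbb F_2$. The modules: $H$ has both spaces $\mathbb F_2$, $t=p^*=\mathrm{id}$, $p_*=0$; $H^{op}$ has both spaces $\mathbb F_2$, $t=p_*=\mathrm{id}$, $p^*=0$; $F$ has $F_\Theta=\mathbb F_2^2$ with $t$ the swap, $F_\bullet=\mathbb F_2$, $p_*(x,y)=x+y$, $p^*(z)=(z,z)$; $S_\bullet$ has $(S_\bullet)_\Theta=0$, $(S_\bullet)_\bullet=\mathbb F_2$; $S_\Theta$ has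 $(S_\Theta)_\Theta=\mathbb F_2$ with $t=\mathrm{id}$ and $(S_\Theta)_\bullet=0$. *)

theory Defs
  imports "HOL-Analysis.Analysis" "HOL-Library.Z2" "HOL-Library.Function_Algebras"
begin

text \<open>A Z/2-module consists of two F_2-vector
spaces M_Theta, M_bullet, given as subspaces (carriers) of ambient F_2-vector
spaces (with scalar multiplications sa, sb), and maps t, p^*, p_*.\<close>

record ('a, 'b) zmod =
  ThC :: "'a set"
  BuC :: "'b set"
  tm  :: "'a \<Rightarrow> 'a"
  pup :: "'b \<Rightarrow> 'a"
  pdn :: "'a \<Rightarrow> 'b"

definition lin_on :: "(bit \<Rightarrow> 'a::plus \<Rightarrow> 'a) \<Rightarrow> (bit \<Rightarrow> 'c::plus \<Rightarrow> 'c) \<Rightarrow> 'a set \<Rightarrow> ('a \<Rightarrow> 'c) \<Rightarrow> bool"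
  where "lin_on s1 s2 V f \<longleftrightarrow>
     (\<forall>x\<in>V. \<forall>y\<in>V. f (x + y) = f x + f y) \<and> (\<forall>c. \<forall>x\<in>V. f (s1 c x) = s2 c (f x))"

definition is_zmod :: "(bit \<Rightarrow> 'a::ab_group_add \<Rightarrow> 'a) \<Rightarrow> (bit \<Rightarrow> 'b::ab_group_add \<Rightarrow> 'b)
    \<Rightarrow> ('a, 'b) zmod \<Rightarrow> bool"
  where "is_zmod sa sb M \<longleftrightarrow>
     vector_space sa \<and> vector_space sb \<and>
     module.subspace sa (ThC M) \<and> module.subspace sb (BuC M) \<and>
     tm M ` ThC M \<subseteq> ThC M \<and> pup M ` BuC M \<subseteq> ThC M \<and> pdn M ` ThC M \<subseteq> BuC M \<and>
     lin_on sa sa (ThC M) (tm M) \<and> lin_on sb sa (BuC M) (pup M) \<and> lin_on sa sb (ThC M) (pdn M) \<and>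
     (\<forall>y\<in>BuC M. tm M (pup M y) = pup M y) \<and>
     (\<forall>x\<in>ThC M. pdn M (tm M x) = pdn M x) \<and>
     (\<forall>x\<in>ThC M. tm M (tm M x) = x) \<and>
     (\<forall>x\<in>ThC M. pup M (pdn M x) = x + tm M x) \<and>
     (\<forall>y\<in>BuC M. pdn M (pup M y) = 0)"

definition fin_gen :: "(bit \<Rightarrow> 'a::ab_group_add \<Rightarrow> 'a) \<Rightarrow> (bit \<Rightarrow> 'b::ab_group_add \<Rightarrow> 'b)
    \<Rightarrow> ('a, 'b) zmod \<Rightarrow> bool"
  where "fin_gen sa sb M \<longleftrightarrow>
     (\<exists>B. finite B \<and> B \<subseteq> ThC M \<and> module.span sa B = ThC M) \<and>
     (\<exists>B. finite B \<and> B \<subseteq> BuC M \<and> module.span sb B = BuC M)"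

definition zmod_iso ::
  "(bit \<Rightarrow> 'a::ab_group_add \<Rightarrow> 'a) \<Rightarrow> (bit \<Rightarrow> 'b::ab_group_add \<Rightarrow> 'b)
   \<Rightarrow> (bit \<Rightarrow> 'c::ab_group_add \<Rightarrow> 'c) \<Rightarrow> (bit \<Rightarrow> 'd::ab_group_add \<Rightarrow> 'd)
   \<Rightarrow> ('a, 'b) zmod \<Rightarrow> ('c, 'd) zmod \<Rightarrow> bool"
  where "zmod_iso sa sb sc sd M N \<longleftrightarrow>
     (\<exists>\<phi> \<psi>. lin_on sa sc (ThC M) \<phi> \<and> lin_on sb sd (BuC M) \<psi> \<and>
        bij_betw \<phi> (ThC M) (ThC N) \<and> bij_betw \<psi> (BuC M) (BuC N) \<and>
        (\<forall>x\<in>ThC M. \<phi> (tm M x) = tm N (\<phi> x)) \<and>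
        (\<forall>y\<in>BuC M. \<phi> (pup M y) = pup N (\<psi> y)) \<and>
        (\<forall>x\<in>ThC M. \<psi> (pdn M x) = pdn N (\<phi> x)))"

text \<open>The five standard modules, realised inside F_2^2 = bit \<times> bit
(F_2 is embedded as the first coordinate where only one dimension is needed).\<close>
datatype kind = KH | KHop | KF | KSbul | KSth

fun std :: "kind \<Rightarrow> (bit \<times> bit, bit \<times> bit) zmod" where
  "std KH = \<lparr>ThC = {(x, 0) | x. True}, BuC = {(x, 0) | x. True},
             tm = id, pup = id, pdn = (\<lambda>_. 0)\<rparr>"
| "std KHop = \<lparr>ThC = {(x, 0) | x. True}, BuC = {(x, 0) | x. True},
             tm = id, pup = (\<lambda>_. 0), pdn = id\<rparr>"
| "std KF = \<lparr>ThC = UNIV, BuC = {(z, 0) | z. True},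
             tm = (\<lambda>(x, y). (y, x)), pup = (\<lambda>(z, _). (z, z)), pdn = (\<lambda>(x, y). (x + y, 0))\<rparr>"
| "std KSbul = \<lparr>ThC = {0}, BuC = {(z, 0) | z. True},
             tm = (\<lambda>_. 0), pup = (\<lambda>_. 0), pdn = (\<lambda>_. 0)\<rparr>"
| "std KSth = \<lparr>ThC = {(x, 0) | x. True}, BuC = {0},
             tm = id, pup = (\<lambda>_. 0), pdn = (\<lambda>_. 0)\<rparr>"

definition sD :: "bit \<Rightarrow> ('i \<Rightarrow> bit \<times> bit) \<Rightarrow> ('i \<Rightarrow> bit \<times> bit)"
  where "sD c f = (\<lambda>i. (c * fst (f i), c * snd (f i)))"

definition dsum :: "'i set \<Rightarrow> ('i \<Rightarrow> ('a::zero, 'b::zero) zmod) \<Rightarrow> ('i \<Rightarrow> 'a, 'i \<Rightarrow> 'b) zmod"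
  where "dsum I Ms =
    \<lparr>ThC = {f. (\<forall>i\<in>I. f i \<in> ThC (Ms i)) \<and> (\<forall>i. i \<notin> I \<longrightarrow> f i = 0)},
     BuC = {g. (\<forall>i\<in>I. g i \<in> BuC (Ms i)) \<and> (\<forall>i. i \<notin> I \<longrightarrow> g i = 0)},
     tm = (\<lambda>f i. if i \<in> I then tm (Ms i) (f i) else 0),
     pup = (\<lambda>g i. if i \<in> I then pup (Ms i) (g i) else 0),
     pdn = (\<lambda>f i. if i \<in> I then pdn (Ms i) (f i) else 0)\<rparr>"

end

theory Submission
  imports Defs
begin


lemma bit_UNIV: "(UNIV :: bit set) = {0, 1}"
  by (auto intro: bit.exhaust)

lemma bit_cases_all: "(\<forall>c::bit. P c) \<longleftrightarrow> P 0 \<and> P 1"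
  by (metis bit.exhaust)

locale bvs = vector_space "s :: bit \<Rightarrow> 'v::ab_group_add \<Rightarrow> 'v" for s
begin


lemma char2[simp]: "x + x = (0::'v)"
proof -
  have "x + x = s 1 x + s 1 x" by simp
  also have "\<dots> = s (1 + 1) x" by (simp only: scale_left_distrib)
  also have "\<dots> = 0" by simp
  finally show ?thesis .
qed

lemma minus_eq[simp]: "- x = (x::'v)"
  by (metis add_left_cancel char2 right_minus)

lemma diff_eq[simp]: "x - y = (x + y::'v)"
  by (simp add: diff_conv_add_uminus)

lemma subspace_bitI:
  assumes "0 \<in> S" "\<And>x y. x \<in> S \<Longrightarrow> y \<in> S \<Longrightarrow> x + y \<in> S"
  shows "subspace S"
  unfolding subspace_def
proof (intro conjI ballI allI)
  fix c x assume "x \<in> S" then show "s c x \<in> S" using assms by (cases c) auto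
qed (use assms in auto)

lemma span_insert_bit: "span (insert b B) = span B \<union> (\<lambda>x. b + x) ` span B"
proof
  show "span (insert b B) \<subseteq> span B \<union> (\<lambda>x. b + x) ` span B"
  proof
    fix x assume "x \<in> span (insert b B)"
    then obtain k where k: "x - s k b \<in> span B" by (auto simp: span_insert)
    show "x \<in> span B \<union> (\<lambda>x. b + x) ` span B"
    proof (cases k)
      case zero then show ?thesis using k by simp
    next
      case one
      then have "x + b \<in> span B" using k by simp
      moreover have "x = b + (x + b)" by (simp add: add.left_commute)
      ultimately show ?thesis by blast
    qed
  qed
next
  show "span B \<union> (\<lambda>x. b + x) ` span B \<subseteq> span (insert b B)"
    by (auto intro: span_add span_base span_mono[THEN subsetD, of B])
qed

lemma finite_span: "finite B \<Longrightarrow> finite (span B)"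
proof (induction B rule: finite_induct)
  case empty then show ?case by simp
next
  case (insert b B) then show ?case by (simp add: span_insert_bit)
qed

lemma card_span: "finite B \<Longrightarrow> independent B \<Longrightarrow> card (span B) = 2 ^ card B"
proof (induction B rule: finite_induct)
  case empty then show ?case by simp
next
  case (insert b B)
  have nb: "b \<notin> span B" and iB: "independent B" using insert.prems insert.hyps independent_insert by auto
  have fin: "finite (span B)" using insert.hyps finite_span by auto
  have disj: "span B \<inter> (\<lambda>x. b + x) ` span B = {}"
  proof (rule ccontr)
    assume "span B \<inter> (\<lambda>x. b + x) ` span B \<noteq> {}"
    then obtain y where y: "y \<in> span B" "b + y \<in> span B" by auto
    then have "(b + y) + y \<in> span B" by (simp add: span_add)
    then have "b \<in> span B" by (simp add: add.assoc)
    with nb show False by simp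
  qed
  have "card ((\<lambda>x. b + x) ` span B) = card (span B)"
    by (rule card_image) (simp add: inj_on_def)
  then have "card (span (insert b B)) = card (span B) + card (span B)"
    using card_Un_disjoint[OF fin finite_imageI[OF fin] disj] by (simp add: span_insert_bit)
  then show ?case using insert iB by simp
qed

lemma card_subspace:
  assumes "subspace X" "finite X"
  shows "card X = 2 ^ dim X"
proof -
  obtain B where B: "B \<subseteq> X" "independent B" "X \<subseteq> span B" "card B = dim X"
    by (rule basis_exists)
  have "span B = X" using B assms span_minimal[of B X] by auto
  moreover have "finite B" using B assms finite_subset by auto
  ultimately show ?thesis using card_span B by auto
qed

lemma basis_extend:
  assumes "subspace X" "finite X" "S \<subseteq> X" "independent S"
  obtains B where "S \<subseteq> B" "B \<subseteq> X" "independent B" "span B = X" "finite B"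
proof -
  obtain B where B: "S \<subseteq> B" "B \<subseteq> X" "independent B" "X \<subseteq> span B"
    using maximal_independent_subset_extend[OF assms(3,4)] by blast
  have "span B = X" using B assms span_minimal[of B X] by auto
  then show ?thesis using that B assms finite_subset by blast
qed

lemma span_sum_subset:
  assumes "finite B" "x \<in> span B"
  shows "\<exists>C \<subseteq> B. x = sum id C"
proof -
  obtain u where u: "x = (\<Sum>v\<in>B. s (u v) v)" using assms span_finite by auto
  have "(\<Sum>v\<in>B. s (u v) v) = (\<Sum>v\<in>{v\<in>B. u v = 1}. s (u v) v)"
    by (rule sum.mono_neutral_right) (use assms in auto)
  also have "\<dots> = sum id {v\<in>B. u v = 1}" by (intro sum.cong) auto
  finally have "x = sum id {v\<in>B. u v = 1}" using u by simp
  then show ?thesis by (intro exI[of _ "{v\<in>B. u v = 1}"]) auto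
qed

end

lemma sum_closed:
  assumes "0 \<in> G" "\<And>x y. x \<in> G \<Longrightarrow> y \<in> G \<Longrightarrow> x + y \<in> G" "\<And>c. c \<in> C \<Longrightarrow> f c \<in> G"
  shows "sum f C \<in> G"
  using assms(3)
proof (induction C rule: infinite_finite_induct)
  case (insert x F) then show ?case using assms(2) by simp
qed (use assms in auto)

lemma sum_additive:
  fixes h :: "'a::comm_monoid_add \<Rightarrow> 'b::ab_group_add"
  assumes "\<And>x y. x \<in> V \<Longrightarrow> y \<in> V \<Longrightarrow> h (x + y) = h x + h y"
    "\<And>x y. x \<in> V \<Longrightarrow> y \<in> V \<Longrightarrow> x + y \<in> V" "0 \<in> V" "\<And>c. c \<in> C \<Longrightarrow> f c \<in> V"
  shows "h (sum f C) = (\<Sum>c\<in>C. h (f c))"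
proof -
  have h0: "h 0 = 0" using assms(1)[OF assms(3) assms(3)] by (simp only: add_0 add_cancel_right_right)
  show ?thesis using assms(4)
  proof (induction C rule: infinite_finite_induct)
    case (insert x F)
    have "sum f F \<in> V" by (rule sum_closed[of V]) (use assms(2,3) insert.prems in auto)
    then show ?case using insert assms(1) by simp
  qed (use h0 in auto)
qed

lemma card_fiber:
  fixes f :: "'a::ab_group_add \<Rightarrow> 'c::ab_group_add"
  assumes fin: "finite A" and cl: "\<And>x y. x \<in> A \<Longrightarrow> y \<in> A \<Longrightarrow> x + y \<in> A"
    and c2: "\<And>x. x \<in> A \<Longrightarrow> x + x = 0"
    and ad: "\<And>x y. x \<in> A \<Longrightarrow> y \<in> A \<Longrightarrow> f (x + y) = f x + f y"
  shows "card A = card (f ` A) * card {x\<in>A. f x = 0}"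
proof -
  let ?K = "{x\<in>A. f x = 0}"
  have fib: "card {x\<in>A. f x = y} = card ?K" if y: "y \<in> f ` A" for y
  proof -
    obtain x0 where x0: "x0 \<in> A" "f x0 = y" using y by auto
    have z: "0 \<in> A" using cl[OF x0(1) x0(1)] c2[OF x0(1)] by simp
    have f0: "f 0 = 0" using ad[OF z z] by simp
    have yy: "y + y = 0" using ad[OF x0(1) x0(1)] c2[OF x0(1)] f0 x0 by simp
    have "bij_betw (\<lambda>k. k + x0) ?K {x\<in>A. f x = y}"
    proof (rule bij_betwI[where g = "\<lambda>x. x + x0"])
      show "(\<lambda>k. k + x0) \<in> ?K \<rightarrow> {x\<in>A. f x = y}" using cl ad x0 by auto
      show "(\<lambda>x. x + x0) \<in> {x\<in>A. f x = y} \<rightarrow> ?K" using cl ad x0 yy by auto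
      show "x + x0 + x0 = x" if "x \<in> ?K" for x using c2[OF x0(1)] by (simp add: add.assoc)
      show "x + x0 + x0 = x" if "x \<in> {x\<in>A. f x = y}" for x using c2[OF x0(1)] by (simp add: add.assoc)
    qed
    then show ?thesis by (simp add: bij_betw_same_card)
  qed
  have eq: "(\<Union>y\<in>f ` A. {x\<in>A. f x = y}) = A" by auto
  have "card (\<Union>y\<in>f ` A. {x\<in>A. f x = y}) = (\<Sum>y\<in>f ` A. card {x\<in>A. f x = y})"
    by (rule card_UN_disjoint) (use fin in auto)
  then have "card A = (\<Sum>y\<in>f ` A. card {x\<in>A. f x = y})" by (simp only: eq)
  also have "\<dots> = (\<Sum>y\<in>f ` A. card ?K)" using fib by simp
  finally show ?thesis by simp
qed




definition dset :: "'i set \<Rightarrow> ('i \<Rightarrow> 'a set) \<Rightarrow> ('i \<Rightarrow> 'a::zero) set" where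
  "dset I A = {g. (\<forall>i\<in>I. g i \<in> A i) \<and> (\<forall>i. i \<notin> I \<longrightarrow> g i = 0)}"

lemma card_dset:
  assumes "finite I"
  shows "card (dset I A) = (\<Prod>i\<in>I. card (A i))"
proof -
  have "bij_betw (\<lambda>g. restrict g I) (dset I A) (PiE I A)"
  proof (rule bij_betw_byWitness[where f' = "\<lambda>h i. if i \<in> I then h i else 0"])
    show "\<forall>a\<in>dset I A. (\<lambda>i. if i \<in> I then restrict a I i else 0) = a"
      by (auto simp: dset_def fun_eq_iff)
    show "\<forall>a'\<in>PiE I A. restrict (\<lambda>i. if i \<in> I then a' i else 0) I = a'"
      by (auto simp: fun_eq_iff PiE_def extensional_def)
    show "(\<lambda>g. restrict g I) ` dset I A \<subseteq> PiE I A" by (auto simp: dset_def)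
    show "(\<lambda>h i. if i \<in> I then h i else 0) ` PiE I A \<subseteq> dset I A" by (auto simp: dset_def)
  qed
  then have "card (dset I A) = card (PiE I A)" by (rule bij_betw_same_card)
  then show ?thesis using card_PiE[OF assms] by simp
qed

lemma dsum_ThC: "ThC (dsum I Ms) = dset I (\<lambda>i. ThC (Ms i))"
  by (simp add: dsum_def dset_def)
lemma dsum_BuC: "BuC (dsum I Ms) = dset I (\<lambda>i. BuC (Ms i))"
  by (simp add: dsum_def dset_def)

lemma dsum_img:
  fixes Ms :: "'i \<Rightarrow> ('a::monoid_add, 'b::zero) zmod"
  shows "(\<lambda>g. g + tm (dsum I Ms) g) ` ThC (dsum I Ms) =
         dset I (\<lambda>i. (\<lambda>x. x + tm (Ms i) x) ` ThC (Ms i))"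
proof
  show "(\<lambda>g. g + tm (dsum I Ms) g) ` ThC (dsum I Ms) \<subseteq> dset I (\<lambda>i. (\<lambda>x. x + tm (Ms i) x) ` ThC (Ms i))"
    by (auto simp: dsum_def dset_def)
next
  show "dset I (\<lambda>i. (\<lambda>x. x + tm (Ms i) x) ` ThC (Ms i)) \<subseteq> (\<lambda>g. g + tm (dsum I Ms) g) ` ThC (dsum I Ms)"
  proof
    fix h assume h: "h \<in> dset I (\<lambda>i. (\<lambda>x. x + tm (Ms i) x) ` ThC (Ms i))"
    define g where "g i = (if i \<in> I then (SOME x. x \<in> ThC (Ms i) \<and> h i = x + tm (Ms i) x) else 0)" for i
    have gi: "g i \<in> ThC (Ms i) \<and> h i = g i + tm (Ms i) (g i)" if "i \<in> I" for i
    proof -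
      have "\<exists>x. x \<in> ThC (Ms i) \<and> h i = x + tm (Ms i) x" using h that by (auto simp: dset_def)
      from someI_ex[OF this] show ?thesis unfolding g_def using that by simp
    qed
    have "g \<in> ThC (dsum I Ms)" using gi by (auto simp: dsum_def g_def)
    moreover have "h = g + tm (dsum I Ms) g"
      using gi h by (auto simp: dsum_def dset_def fun_eq_iff g_def)
    ultimately show "h \<in> (\<lambda>g. g + tm (dsum I Ms) g) ` ThC (dsum I Ms)" by blast
  qed
qed

lemma dsum_kdn:
  "{x \<in> ThC (dsum I Ms). pdn (dsum I Ms) x = 0} = dset I (\<lambda>i. {x \<in> ThC (Ms i). pdn (Ms i) x = 0})"
  by (auto simp: dsum_def dset_def fun_eq_iff)

lemma dsum_kup:
  "{x \<in> BuC (dsum I Ms). pup (dsum I Ms) x = 0} = dset I (\<lambda>i. {x \<in> BuC (Ms i). pup (Ms i) x = 0})"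
  by (auto simp: dsum_def dset_def fun_eq_iff)

fun cT :: "kind \<Rightarrow> nat" where
  "cT KH = 1" | "cT KHop = 1" | "cT KF = 2" | "cT KSbul = 0" | "cT KSth = 1"
fun cB :: "kind \<Rightarrow> nat" where
  "cB KH = 1" | "cB KHop = 1" | "cB KF = 1" | "cB KSbul = 1" | "cB KSth = 0"
fun cI :: "kind \<Rightarrow> nat" where
  "cI KH = 0" | "cI KHop = 0" | "cI KF = 1" | "cI KSbul = 0" | "cI KSth = 0"
fun cKd :: "kind \<Rightarrow> nat" where
  "cKd KH = 1" | "cKd KHop = 0" | "cKd KF = 1" | "cKd KSbul = 0" | "cKd KSth = 1"
fun cKu :: "kind \<Rightarrow> nat" where
  "cKu KH = 0" | "cKu KHop = 1" | "cKu KF = 0" | "cKu KSbul = 1" | "cKu KSth = 0"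

lemma Collect_pair: "{x::bit\<times>bit. P x} = (if P (0,0) then {(0,0)} else {}) \<union> (if P (0,1) then {(0,1)} else {})
   \<union> (if P (1,0) then {(1,0)} else {}) \<union> (if P (1,1) then {(1,1)} else {})"
proof (rule set_eqI)
  fix x :: "bit \<times> bit"
  obtain a b where "x = (a,b)" by fastforce
  then show "x \<in> {x::bit\<times>bit. P x} \<longleftrightarrow> x \<in> (if P (0,0) then {(0,0)} else {}) \<union> (if P (0,1) then {(0,1)} else {})
   \<union> (if P (1,0) then {(1,0)} else {}) \<union> (if P (1,1) then {(1,1)} else {})" by (cases a; cases b) auto
qed
lemma UNIV_pair: "(UNIV :: (bit \<times> bit) set) = {(0,0),(0,1),(1,0),(1,1)}"
  using bit.exhaust by auto

lemma card_T: "card (ThC (std K)) = 2 ^ cT K"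
  by (cases K) (simp_all add: Collect_pair UNIV_pair zero_prod_def card_insert_if)
lemma card_B: "card (BuC (std K)) = 2 ^ cB K"
  by (cases K) (simp_all add: Collect_pair UNIV_pair zero_prod_def card_insert_if)
lemma card_I: "card ((\<lambda>x. x + tm (std K) x) ` ThC (std K)) = 2 ^ cI K"
  by (cases K) (simp_all add: Collect_pair UNIV_pair zero_prod_def card_insert_if)
lemma card_Kd: "card {x \<in> ThC (std K). pdn (std K) x = 0} = 2 ^ cKd K"
  by (cases K) (simp_all add: Collect_pair UNIV_pair zero_prod_def card_insert_if)
lemma card_Ku: "card {x \<in> BuC (std K). pup (std K) x = 0} = 2 ^ cKu K"
  by (cases K) (simp_all add: Collect_pair UNIV_pair zero_prod_def card_insert_if)

definition cnt :: "(nat \<Rightarrow> kind) \<Rightarrow> nat \<Rightarrow> kind \<Rightarrow> nat" where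
  "cnt k n K = card {i. i < n \<and> k i = K}"

lemma cnt_Suc: "cnt k (Suc n) K = cnt k n K + (if k n = K then 1 else 0)"
proof -
  have "{i. i < Suc n \<and> k i = K} = {i. i < n \<and> k i = K} \<union> (if k n = K then {n} else {})"
    by (auto simp: less_Suc_eq)
  then show ?thesis unfolding cnt_def by (auto simp: card_insert_if)
qed

lemma sum_kinds:
  "(\<Sum>i<n. c (k i)) = c KH * cnt k n KH + c KHop * cnt k n KHop + c KF * cnt k n KF
     + c KSbul * cnt k n KSbul + c KSth * cnt k n KSth"
proof (induction n)
  case 0 then show ?case by (simp add: cnt_def)
next
  case (Suc n) then show ?case by (cases "k n") (simp_all add: cnt_Suc algebra_simps)
qed

lemma prod_pow: "(\<Prod>i<n. (2::nat) ^ c (k i)) = 2 ^ (\<Sum>i<n. c (k i))"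
  by (simp add: power_sum)




locale zm = A: bvs sa + B: bvs sb
  for sa :: "bit \<Rightarrow> 'a::ab_group_add \<Rightarrow> 'a" and sb :: "bit \<Rightarrow> 'b::ab_group_add \<Rightarrow> 'b" +
  fixes M :: "('a, 'b) zmod"
  assumes zmod: "is_zmod sa sb M" and fg: "fin_gen sa sb M"
begin

abbreviation "V \<equiv> ThC M"
abbreviation "W \<equiv> BuC M"
abbreviation "T \<equiv> tm M"
abbreviation "P \<equiv> pup M"
abbreviation "Q \<equiv> pdn M"

lemma Vsub: "A.subspace V" and Wsub: "B.subspace W"
  using zmod by (auto simp: is_zmod_def)

lemma V0[simp]: "0 \<in> V" and W0[simp]: "0 \<in> W"
  using Vsub Wsub A.subspace_0 B.subspace_0 by auto

lemma Vadd[simp]: "x \<in> V \<Longrightarrow> y \<in> V \<Longrightarrow> x + y \<in> V"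
  using Vsub A.subspace_add by auto
lemma Wadd[simp]: "x \<in> W \<Longrightarrow> y \<in> W \<Longrightarrow> x + y \<in> W"
  using Wsub B.subspace_add by auto
lemma Vscale[simp]: "x \<in> V \<Longrightarrow> sa c x \<in> V"
  using Vsub A.subspace_scale by auto
lemma Wscale[simp]: "x \<in> W \<Longrightarrow> sb c x \<in> W"
  using Wsub B.subspace_scale by auto

lemma TV[simp]: "x \<in> V \<Longrightarrow> T x \<in> V"
  and PV[simp]: "y \<in> W \<Longrightarrow> P y \<in> V"
  and QW[simp]: "x \<in> V \<Longrightarrow> Q x \<in> W"
  using zmod by (auto simp: is_zmod_def)

lemma T_add: "x \<in> V \<Longrightarrow> y \<in> V \<Longrightarrow> T (x + y) = T x + T y"
  and P_add: "u \<in> W \<Longrightarrow> v \<in> W \<Longrightarrow> P (u + v) = P u + P v"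
  and Q_add: "x \<in> V \<Longrightarrow> y \<in> V \<Longrightarrow> Q (x + y) = Q x + Q y"
  and T_scale: "x \<in> V \<Longrightarrow> T (sa c x) = sa c (T x)"
  and P_scale: "u \<in> W \<Longrightarrow> P (sb c u) = sa c (P u)"
  and Q_scale: "x \<in> V \<Longrightarrow> Q (sa c x) = sb c (Q x)"
  using zmod by (auto simp: is_zmod_def lin_on_def)

lemma T0[simp]: "T 0 = 0" and P0[simp]: "P 0 = 0" and Q0[simp]: "Q 0 = 0"
  using T_add[of 0 0] P_add[of 0 0] Q_add[of 0 0] by simp_all

lemma TP[simp]: "u \<in> W \<Longrightarrow> T (P u) = P u"
  and QT[simp]: "x \<in> V \<Longrightarrow> Q (T x) = Q x"
  and TT[simp]: "x \<in> V \<Longrightarrow> T (T x) = x"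
  and PQ: "x \<in> V \<Longrightarrow> P (Q x) = x + T x"
  and QP[simp]: "u \<in> W \<Longrightarrow> Q (P u) = 0"
  using zmod by (auto simp: is_zmod_def)

lemma finV: "finite V"
proof -
  obtain B where "finite B" "A.span B = V" using fg unfolding fin_gen_def by blast
  then show ?thesis using A.finite_span by metis
qed
lemma finW: "finite W"
proof -
  obtain B where "finite B" "B.span B = W" using fg unfolding fin_gen_def by blast
  then show ?thesis using B.finite_span by metis
qed

definition "imN = (\<lambda>x. x + T x) ` V"
definition "kerQ = {x\<in>V. Q x = 0}"
definition "kerP = {y\<in>W. P y = 0}"

lemma imN_sub: "A.subspace imN"
proof (rule A.subspace_bitI)
  show "0 \<in> imN" unfolding imN_def by (rule image_eqI[of _ _ 0]) simp_all
  fix x y assume "x \<in> imN" "y \<in> imN"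
  then obtain a b where ab: "a \<in> V" "b \<in> V" "x = a + T a" "y = b + T b" by (auto simp: imN_def)
  then have "x + y = (a + b) + T (a + b)" by (simp add: T_add algebra_simps)
  then show "x + y \<in> imN" using ab unfolding imN_def by (intro image_eqI[of _ _ "a + b"]) auto
qed

lemma kerQ_sub: "A.subspace kerQ"
  by (rule A.subspace_bitI) (auto simp: kerQ_def Q_add)
lemma kerP_sub: "B.subspace kerP"
  by (rule B.subspace_bitI) (auto simp: kerP_def P_add)

lemma fin_imN: "finite imN" using finV by (simp add: imN_def)
lemma fin_kerQ: "finite kerQ" using finV by (simp add: kerQ_def)
lemma fin_kerP: "finite kerP" using finW by (simp add: kerP_def)

lemma inj_zero:
  assumes "inj_on f S" "x \<in> S" "0 \<in> S" "f 0 = 0"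
  shows "f x = 0 \<longleftrightarrow> x = 0"
  using assms by (metis inj_onD)

lemma unique:
  assumes iso: "zmod_iso sa sb sD sD M (dsum {..<n} (\<lambda>i. std (k i)))"
  shows "A.dim V = cT KH * cnt k n KH + cT KHop * cnt k n KHop + cT KF * cnt k n KF
     + cT KSbul * cnt k n KSbul + cT KSth * cnt k n KSth"
    "B.dim W = cB KH * cnt k n KH + cB KHop * cnt k n KHop + cB KF * cnt k n KF
     + cB KSbul * cnt k n KSbul + cB KSth * cnt k n KSth"
    "A.dim imN = cI KH * cnt k n KH + cI KHop * cnt k n KHop + cI KF * cnt k n KF
     + cI KSbul * cnt k n KSbul + cI KSth * cnt k n KSth"
    "A.dim kerQ = cKd KH * cnt k n KH + cKd KHop * cnt k n KHop + cKd KF * cnt k n KF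
     + cKd KSbul * cnt k n KSbul + cKd KSth * cnt k n KSth"
    "B.dim kerP = cKu KH * cnt k n KH + cKu KHop * cnt k n KHop + cKu KF * cnt k n KF
     + cKu KSbul * cnt k n KSbul + cKu KSth * cnt k n KSth"
proof -
  let ?D = "dsum {..<n} (\<lambda>i. std (k i))"
  obtain \<phi> \<psi> where lp: "lin_on sa sD V \<phi>" and lq: "lin_on sb sD W \<psi>"
    and bp: "bij_betw \<phi> V (ThC ?D)" and bq: "bij_betw \<psi> W (BuC ?D)"
    and cT': "\<forall>x\<in>V. \<phi> (T x) = tm ?D (\<phi> x)"
    and cP': "\<forall>y\<in>W. \<phi> (P y) = pup ?D (\<psi> y)"
    and cQ': "\<forall>x\<in>V. \<psi> (Q x) = pdn ?D (\<phi> x)"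
    using iso unfolding zmod_iso_def by blast
  have ip: "inj_on \<phi> V" and iq: "inj_on \<psi> W" using bp bq by (auto simp: bij_betw_def)
  have ip0: "\<phi> 0 = 0" using lp unfolding lin_on_def by (metis V0 add_0 add_cancel_right_right)
  have iq0: "\<psi> 0 = 0" using lq unfolding lin_on_def by (metis W0 add_0 add_cancel_right_right)
  have padd: "\<phi> (x + y) = \<phi> x + \<phi> y" if "x \<in> V" "y \<in> V" for x y
    using lp that unfolding lin_on_def by blast
  have imV: "\<phi> ` V = ThC ?D" and imW: "\<psi> ` W = BuC ?D" using bp bq by (auto simp: bij_betw_def)
  have e3: "\<phi> ` imN = (\<lambda>g. g + tm ?D g) ` ThC ?D"
  proof -
    have "\<phi> ` imN = (\<lambda>x. \<phi> x + tm ?D (\<phi> x)) ` V"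
      unfolding imN_def image_image by (rule image_cong) (auto simp: padd cT')
    also have "\<dots> = (\<lambda>g. g + tm ?D g) ` ThC ?D" unfolding imV[symmetric] image_image by simp
    finally show ?thesis .
  qed
  have e4: "\<phi> ` kerQ = {g \<in> ThC ?D. pdn ?D g = 0}"
  proof -
    have "\<forall>x\<in>V. (pdn ?D (\<phi> x) = 0) = (Q x = 0)" using cQ' inj_zero[OF iq _ W0 iq0] QW by metis
    then have "kerQ = {x\<in>V. pdn ?D (\<phi> x) = 0}" unfolding kerQ_def by auto
    then have "\<phi> ` kerQ = \<phi> ` {x\<in>V. pdn ?D (\<phi> x) = 0}" by simp
    also have "\<dots> = {g \<in> \<phi> ` V. pdn ?D g = 0}" by auto
    finally show ?thesis using imV by simp
  qed
  have e5: "\<psi> ` kerP = {g \<in> BuC ?D. pup ?D g = 0}"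
  proof -
    have "\<forall>x\<in>W. (pup ?D (\<psi> x) = 0) = (P x = 0)" using cP' inj_zero[OF ip _ V0 ip0] PV by metis
    then have "kerP = {x\<in>W. pup ?D (\<psi> x) = 0}" unfolding kerP_def by auto
    then have "\<psi> ` kerP = \<psi> ` {y\<in>W. pup ?D (\<psi> y) = 0}" by simp
    also have "\<dots> = {g \<in> \<psi> ` W. pup ?D g = 0}" by auto
    finally show ?thesis using imW by simp
  qed
  have cimN: "card imN = card (\<phi> ` imN)"
    by (rule card_image[symmetric], rule inj_on_subset[OF ip]) (auto simp: imN_def)
  have ckerQ: "card kerQ = card (\<phi> ` kerQ)"
    by (rule card_image[symmetric], rule inj_on_subset[OF ip]) (auto simp: kerQ_def)
  have ckerP: "card kerP = card (\<psi> ` kerP)"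
    by (rule card_image[symmetric], rule inj_on_subset[OF iq]) (auto simp: kerP_def)
  have cV: "card V = card (\<phi> ` V)" by (rule card_image[symmetric, OF ip])
  have cW: "card W = card (\<psi> ` W)" by (rule card_image[symmetric, OF iq])
  have fin: "finite {..<n}" by simp
  have two: "(2::nat) ^ a = 2 ^ b \<Longrightarrow> a = b" for a b by simp
  have "A.dim V = (\<Sum>i<n. cT (k i))"
    using cV imV A.card_subspace[OF Vsub finV]
    by (simp add: dsum_ThC card_dset[OF fin] card_T prod_pow)
  then show "A.dim V = cT KH * cnt k n KH + cT KHop * cnt k n KHop + cT KF * cnt k n KF
     + cT KSbul * cnt k n KSbul + cT KSth * cnt k n KSth" using sum_kinds[of cT k n] by simp
  have "B.dim W = (\<Sum>i<n. cB (k i))"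
    using cW imW B.card_subspace[OF Wsub finW]
    by (simp add: dsum_BuC card_dset[OF fin] card_B prod_pow)
  then show "B.dim W = cB KH * cnt k n KH + cB KHop * cnt k n KHop + cB KF * cnt k n KF
     + cB KSbul * cnt k n KSbul + cB KSth * cnt k n KSth" using sum_kinds[of cB k n] by simp
  have "A.dim imN = (\<Sum>i<n. cI (k i))"
    using cimN e3 A.card_subspace[OF imN_sub fin_imN]
    by (simp add: dsum_img card_dset[OF fin] card_I prod_pow)
  then show "A.dim imN = cI KH * cnt k n KH + cI KHop * cnt k n KHop + cI KF * cnt k n KF
     + cI KSbul * cnt k n KSbul + cI KSth * cnt k n KSth" using sum_kinds[of cI k n] by simp
  have "A.dim kerQ = (\<Sum>i<n. cKd (k i))"
    using ckerQ e4 A.card_subspace[OF kerQ_sub fin_kerQ]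
    by (simp add: dsum_kdn card_dset[OF fin] card_Kd prod_pow)
  then show "A.dim kerQ = cKd KH * cnt k n KH + cKd KHop * cnt k n KHop + cKd KF * cnt k n KF
     + cKd KSbul * cnt k n KSbul + cKd KSth * cnt k n KSth" using sum_kinds[of cKd k n] by simp
  have "B.dim kerP = (\<Sum>i<n. cKu (k i))"
    using ckerP e5 B.card_subspace[OF kerP_sub fin_kerP]
    by (simp add: dsum_kup card_dset[OF fin] card_Ku prod_pow)
  then show "B.dim kerP = cKu KH * cnt k n KH + cKu KHop * cnt k n KHop + cKu KF * cnt k n KF
     + cKu KSbul * cnt k n KSbul + cKu KSth * cnt k n KSth" using sum_kinds[of cKu k n] by simp
qed

end



lemma std_add: "x \<in> ThC (std K) \<Longrightarrow> y \<in> ThC (std K) \<Longrightarrow> x + y \<in> ThC (std K)"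
  by (cases K) auto
lemma std_badd: "x \<in> BuC (std K) \<Longrightarrow> y \<in> BuC (std K) \<Longrightarrow> x + y \<in> BuC (std K)"
  by (cases K) auto
lemma std_0: "0 \<in> ThC (std K)" "0 \<in> BuC (std K)"
  by (cases K; simp add: zero_prod_def)+
lemma std_tm: "x \<in> ThC (std K) \<Longrightarrow> tm (std K) x \<in> ThC (std K)"
  by (cases K) (auto simp: zero_prod_def)
lemma std_pup: "y \<in> BuC (std K) \<Longrightarrow> pup (std K) y \<in> ThC (std K)"
  by (cases K) (auto simp: zero_prod_def)
lemma std_pdn: "x \<in> ThC (std K) \<Longrightarrow> pdn (std K) x \<in> BuC (std K)"
proof -
  obtain x1 x2 where x: "x = (x1, x2)" by fastforce
  show "x \<in> ThC (std K) \<Longrightarrow> pdn (std K) x \<in> BuC (std K)" unfolding x by (cases K) (auto simp: zero_prod_def)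
qed

lemma sD0: "sD 0 g = 0" by (simp add: sD_def fun_eq_iff zero_prod_def)
lemma sD1: "sD 1 g = g" by (simp only: sD_def mult_1 prod.collapse)

abbreviation "DD n k \<equiv> dsum {..<n} (\<lambda>i. std (k i))"

lemma DD_add: "g \<in> ThC (DD n k) \<Longrightarrow> h \<in> ThC (DD n k) \<Longrightarrow> g + h \<in> ThC (DD n k)"
  by (auto simp: dsum_def std_add)
lemma DD_badd: "g \<in> BuC (DD n k) \<Longrightarrow> h \<in> BuC (DD n k) \<Longrightarrow> g + h \<in> BuC (DD n k)"
  by (auto simp: dsum_def std_badd)
lemma DD_0: "0 \<in> ThC (DD n k)" "0 \<in> BuC (DD n k)"
  by (auto simp: dsum_def std_0)
lemma DD_tm: "g \<in> ThC (DD n k) \<Longrightarrow> tm (DD n k) g \<in> ThC (DD n k)"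
  by (auto simp: dsum_def std_tm)
lemma DD_pup: "g \<in> BuC (DD n k) \<Longrightarrow> pup (DD n k) g \<in> ThC (DD n k)"
  by (auto simp: dsum_def std_pup)
lemma DD_pdn: "g \<in> ThC (DD n k) \<Longrightarrow> pdn (DD n k) g \<in> BuC (DD n k)"
  by (auto simp: dsum_def std_pdn)
lemma DD_sD: "g \<in> ThC (DD n k) \<Longrightarrow> sD c g \<in> ThC (DD n k)"
  by (cases c) (simp_all add: sD0 sD1 DD_0)
lemma DD_bsD: "g \<in> BuC (DD n k) \<Longrightarrow> sD c g \<in> BuC (DD n k)"
  by (cases c) (simp_all add: sD0 sD1 DD_0)

context zm
begin

definition phit :: "'a \<Rightarrow> bit \<times> bit \<Rightarrow> 'a" where "phit a x = sa (fst x) a + sa (snd x) (T a)"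
definition psit :: "'b \<Rightarrow> bit \<times> bit \<Rightarrow> 'b" where "psit b y = sb (fst y) b"

definition good :: "kind \<Rightarrow> 'a \<Rightarrow> 'b \<Rightarrow> bool" where
  "good K a b = (case K of KF \<Rightarrow> a \<in> V \<and> b = Q a
     | KH \<Rightarrow> b \<in> W \<and> a = P b
     | KHop \<Rightarrow> a \<in> V \<and> T a = a \<and> b = Q a \<and> P b = 0
     | KSbul \<Rightarrow> a = 0 \<and> b \<in> W \<and> P b = 0
     | KSth \<Rightarrow> a \<in> V \<and> T a = a \<and> Q a = 0 \<and> b = 0)"

lemma good_V: "good K a b \<Longrightarrow> a \<in> V"
  by (cases K) (auto simp: good_def)
lemma good_W: "good K a b \<Longrightarrow> b \<in> W"
  by (cases K) (auto simp: good_def)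

lemma phit_V: "a \<in> V \<Longrightarrow> phit a x \<in> V" by (simp add: phit_def)
lemma psit_W: "b \<in> W \<Longrightarrow> psit b y \<in> W" by (simp add: psit_def)
lemma phit_add: "phit a (x + y) = phit a x + phit a y"
  unfolding phit_def by (simp only: fst_add snd_add A.scale_left_distrib add_ac)
lemma psit_add: "psit b (x + y) = psit b x + psit b y"
  unfolding psit_def by (simp only: fst_add B.scale_left_distrib)
lemma phit0[simp]: "phit a 0 = 0" by (simp add: phit_def)
lemma psit0[simp]: "psit b 0 = 0" by (simp add: psit_def)

lemma loc_tm:
  assumes "good K a b" "x \<in> ThC (std K)"
  shows "phit a (tm (std K) x) = T (phit a x)"
proof -
  obtain x1 x2 where x: "x = (x1, x2)" by fastforce
  show ?thesis using assms unfolding x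
    by (cases K; cases x1; cases x2) (auto simp: good_def phit_def T_add add.commute zero_prod_def)
qed

lemma loc_pup:
  assumes "good K a b" "y \<in> BuC (std K)"
  shows "phit a (pup (std K) y) = P (psit b y)"
proof -
  obtain x1 x2 where x: "y = (x1, x2)" by fastforce
  show ?thesis using assms unfolding x
    by (cases K; cases x1; cases x2) (auto simp: good_def phit_def psit_def PQ zero_prod_def)
qed

lemma loc_pdn:
  assumes "good K a b" "x \<in> ThC (std K)"
  shows "psit b (pdn (std K) x) = Q (phit a x)"
proof -
  obtain x1 x2 where x: "x = (x1, x2)" by fastforce
  show ?thesis using assms unfolding x
    by (cases K; cases x1; cases x2) (auto simp: good_def phit_def psit_def Q_add zero_prod_def)
qed

end



context zm
begin

definition PhiF :: "nat \<Rightarrow> (nat \<Rightarrow> 'a) \<Rightarrow> (nat \<Rightarrow> bit \<times> bit) \<Rightarrow> 'a" where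
  "PhiF n a g = (\<Sum>i<n. phit (a i) (g i))"
definition PsiF :: "nat \<Rightarrow> (nat \<Rightarrow> 'b) \<Rightarrow> (nat \<Rightarrow> bit \<times> bit) \<Rightarrow> 'b" where
  "PsiF n b h = (\<Sum>i<n. psit (b i) (h i))"

lemma PhiF_add: "PhiF n a (g + h) = PhiF n a g + PhiF n a h"
  by (simp add: PhiF_def phit_add sum.distrib)
lemma PsiF_add: "PsiF n b (g + h) = PsiF n b g + PsiF n b h"
  by (simp add: PsiF_def psit_add sum.distrib)
lemma PhiF_0: "PhiF n a 0 = 0" by (simp add: PhiF_def)
lemma PsiF_0: "PsiF n b 0 = 0" by (simp add: PsiF_def)

lemma iso_from_family:
  assumes good: "\<And>i. i < n \<Longrightarrow> good (k i) (a i) (b i)"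
    and sV: "V \<subseteq> PhiF n a ` ThC (DD n k)"
    and sW: "W \<subseteq> PsiF n b ` BuC (DD n k)"
    and cV: "card V = card (ThC (DD n k))"
    and cW: "card W = card (BuC (DD n k))"
  shows "zmod_iso sa sb sD sD M (DD n k)"
proof -
  let ?D = "DD n k"
  let ?F = "PhiF n a" and ?G = "PsiF n b"
  have aV: "a i \<in> V" if "i < n" for i using good[OF that] good_V by blast
  have bW: "b i \<in> W" if "i < n" for i using good[OF that] good_W by blast
  have FV: "?F g \<in> V" for g
    unfolding PhiF_def by (rule sum_closed) (auto intro: phit_V aV)
  have GW: "?G h \<in> W" for h
    unfolding PsiF_def by (rule sum_closed) (auto intro: psit_W bW)
  have imF: "?F ` ThC ?D = V" using sV FV by auto
  have imG: "?G ` BuC ?D = W" using sW GW by auto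
  have finD: "finite (ThC ?D)"
    using cV finV V0 by (metis card_gt_0_iff empty_iff)
  have finDB: "finite (BuC ?D)"
    using cW finW W0 by (metis card_gt_0_iff empty_iff)
  have injF: "inj_on ?F (ThC ?D)" by (rule eq_card_imp_inj_on[OF finD]) (simp add: imF cV)
  have injG: "inj_on ?G (BuC ?D)" by (rule eq_card_imp_inj_on[OF finDB]) (simp add: imG cW)
  have bF: "bij_betw ?F (ThC ?D) V" using injF imF by (simp add: bij_betw_def)
  have bG: "bij_betw ?G (BuC ?D) W" using injG imG by (simp add: bij_betw_def)
  have gi: "g i \<in> ThC (std (k i))" if "g \<in> ThC ?D" "i < n" for g i
    using that by (simp add: dsum_def)
  have hi: "h i \<in> BuC (std (k i))" if "h \<in> BuC ?D" "i < n" for h i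
    using that by (simp add: dsum_def)
  have c1: "?F (tm ?D g) = T (?F g)" if g: "g \<in> ThC ?D" for g
  proof -
    have "?F (tm ?D g) = (\<Sum>i<n. T (phit (a i) (g i)))"
      unfolding PhiF_def by (rule sum.cong) (auto simp: dsum_def loc_tm[OF good gi[OF g]])
    also have "\<dots> = T (?F g)" unfolding PhiF_def
      by (rule sum_additive[where V=V, symmetric]) (auto simp: T_add intro: phit_V aV)
    finally show ?thesis .
  qed
  have c2: "?F (pup ?D h) = P (?G h)" if h: "h \<in> BuC ?D" for h
  proof -
    have "?F (pup ?D h) = (\<Sum>i<n. P (psit (b i) (h i)))"
      unfolding PhiF_def by (rule sum.cong) (auto simp: dsum_def loc_pup[OF good hi[OF h]])
    also have "\<dots> = P (?G h)" unfolding PsiF_def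
      by (rule sum_additive[where V=W, symmetric]) (auto simp: P_add intro: psit_W bW)
    finally show ?thesis .
  qed
  have c3: "?G (pdn ?D g) = Q (?F g)" if g: "g \<in> ThC ?D" for g
  proof -
    have "?G (pdn ?D g) = (\<Sum>i<n. Q (phit (a i) (g i)))"
      unfolding PsiF_def by (rule sum.cong) (auto simp: dsum_def loc_pdn[OF good gi[OF g]])
    also have "\<dots> = Q (?F g)" unfolding PhiF_def
      by (rule sum_additive[where V=V, symmetric]) (auto simp: Q_add intro: phit_V aV)
    finally show ?thesis .
  qed
  define \<phi> where "\<phi> = inv_into (ThC ?D) ?F"
  define \<psi> where "\<psi> = inv_into (BuC ?D) ?G"
  have \<phi>D: "\<phi> x \<in> ThC ?D" if "x \<in> V" for x
    unfolding \<phi>_def using that imF by (metis inv_into_into)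
  have F\<phi>: "?F (\<phi> x) = x" if "x \<in> V" for x
    unfolding \<phi>_def using that imF by (metis f_inv_into_f)
  have \<phi>F: "\<phi> (?F g) = g" if "g \<in> ThC ?D" for g
    unfolding \<phi>_def using inv_into_f_f[OF injF that] .
  have \<psi>D: "\<psi> x \<in> BuC ?D" if "x \<in> W" for x
    unfolding \<psi>_def using that imG by (metis inv_into_into)
  have G\<psi>: "?G (\<psi> x) = x" if "x \<in> W" for x
    unfolding \<psi>_def using that imG by (metis f_inv_into_f)
  have \<psi>G: "\<psi> (?G g) = g" if "g \<in> BuC ?D" for g
    unfolding \<psi>_def using inv_into_f_f[OF injG that] .
  have \<phi>0: "\<phi> 0 = 0" using \<phi>F[OF DD_0(1)] PhiF_0 by simp
  have \<psi>0: "\<psi> 0 = 0" using \<psi>G[OF DD_0(2)] PsiF_0 by simp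
  have \<phi>add: "\<phi> (x + y) = \<phi> x + \<phi> y" if "x \<in> V" "y \<in> V" for x y
  proof -
    have "?F (\<phi> x + \<phi> y) = x + y" using that by (simp add: PhiF_add F\<phi>)
    then show ?thesis using \<phi>F[OF DD_add[OF \<phi>D \<phi>D]] that by metis
  qed
  have \<psi>add: "\<psi> (x + y) = \<psi> x + \<psi> y" if "x \<in> W" "y \<in> W" for x y
  proof -
    have "?G (\<psi> x + \<psi> y) = x + y" using that by (simp add: PsiF_add G\<psi>)
    then show ?thesis using \<psi>G[OF DD_badd[OF \<psi>D \<psi>D]] that by metis
  qed
  have l1: "lin_on sa sD V \<phi>"
    unfolding lin_on_def
  proof (intro conjI ballI allI)
    fix x y assume "x \<in> V" "y \<in> V" then show "\<phi> (x + y) = \<phi> x + \<phi> y" by (rule \<phi>add)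
  next
    fix c x assume "x \<in> V" then show "\<phi> (sa c x) = sD c (\<phi> x)"
      by (cases c) (simp_all add: sD0 sD1 \<phi>0)
  qed
  have l2: "lin_on sb sD W \<psi>"
    unfolding lin_on_def
  proof (intro conjI ballI allI)
    fix x y assume "x \<in> W" "y \<in> W" then show "\<psi> (x + y) = \<psi> x + \<psi> y" by (rule \<psi>add)
  next
    fix c x assume "x \<in> W" then show "\<psi> (sb c x) = sD c (\<psi> x)"
      by (cases c) (simp_all add: sD0 sD1 \<psi>0)
  qed
  have b1: "bij_betw \<phi> V (ThC ?D)" unfolding \<phi>_def using bij_betw_inv_into[OF bF] .
  have b2: "bij_betw \<psi> W (BuC ?D)" unfolding \<psi>_def using bij_betw_inv_into[OF bG] .
  have m1: "\<phi> (T x) = tm ?D (\<phi> x)" if "x \<in> V" for x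
  proof -
    have "?F (tm ?D (\<phi> x)) = T x" using c1[OF \<phi>D[OF that]] F\<phi>[OF that] by simp
    then show ?thesis using \<phi>F[OF DD_tm[OF \<phi>D[OF that]]] by simp
  qed
  have m2: "\<phi> (P y) = pup ?D (\<psi> y)" if "y \<in> W" for y
  proof -
    have "?F (pup ?D (\<psi> y)) = P y" using c2[OF \<psi>D[OF that]] G\<psi>[OF that] by simp
    then show ?thesis using \<phi>F[OF DD_pup[OF \<psi>D[OF that]]] by simp
  qed
  have m3: "\<psi> (Q x) = pdn ?D (\<phi> x)" if "x \<in> V" for x
  proof -
    have "?G (pdn ?D (\<phi> x)) = Q x" using c3[OF \<phi>D[OF that]] F\<phi>[OF that] by simp
    then show ?thesis using \<psi>G[OF DD_pdn[OF \<phi>D[OF that]]] by simp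
  qed
  show ?thesis unfolding zmod_iso_def
    using l1 l2 b1 b2 m1 m2 m3 by blast
qed

end



context zm
begin

lemma unit_in:
  assumes "i < n" "x \<in> ThC (std (k i))"
  shows "(\<lambda>j. if j = i then x else 0) \<in> ThC (DD n k)"
  using assms by (auto simp: dsum_def std_0)

lemma unit_inB:
  assumes "i < n" "x \<in> BuC (std (k i))"
  shows "(\<lambda>j. if j = i then x else 0) \<in> BuC (DD n k)"
  using assms by (auto simp: dsum_def std_0)

lemma PhiF_unit:
  assumes "i < n"
  shows "PhiF n a (\<lambda>j. if j = i then x else 0) = phit (a i) x"
proof -
  have "PhiF n a (\<lambda>j. if j = i then x else 0) = (\<Sum>j<n. if j = i then phit (a i) x else 0)"
    unfolding PhiF_def by (rule sum.cong) auto
  also have "\<dots> = phit (a i) x" using assms by (simp add: sum.delta')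
  finally show ?thesis .
qed

lemma PsiF_unit:
  assumes "i < n"
  shows "PsiF n b (\<lambda>j. if j = i then x else 0) = psit (b i) x"
proof -
  have "PsiF n b (\<lambda>j. if j = i then x else 0) = (\<Sum>j<n. if j = i then psit (b i) x else 0)"
    unfolding PsiF_def by (rule sum.cong) auto
  also have "\<dots> = psit (b i) x" using assms by (simp add: sum.delta')
  finally show ?thesis .
qed

lemma gen_phi:
  assumes "t \<in> set L" "x \<in> ThC (std (fst t))"
  shows "phit (fst (snd t)) x \<in> PhiF (length L) (\<lambda>i. fst (snd (L!i))) ` ThC (DD (length L) (\<lambda>i. fst (L!i)))"
proof -
  obtain i where i: "i < length L" "L ! i = t" using assms(1) by (auto simp: in_set_conv_nth)
  show ?thesis
    using unit_in[of i "length L" x "\<lambda>i. fst (L!i)"] PhiF_unit[of i "length L" "\<lambda>i. fst (snd (L!i))" x] i assms(2)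
    by (metis (no_types, lifting) image_eqI)
qed

lemma gen_psi:
  assumes "t \<in> set L" "x \<in> BuC (std (fst t))"
  shows "psit (snd (snd t)) x \<in> PsiF (length L) (\<lambda>i. snd (snd (L!i))) ` BuC (DD (length L) (\<lambda>i. fst (L!i)))"
proof -
  obtain i where i: "i < length L" "L ! i = t" using assms(1) by (auto simp: in_set_conv_nth)
  show ?thesis
    using unit_inB[of i "length L" x "\<lambda>i. fst (L!i)"] PsiF_unit[of i "length L" "\<lambda>i. snd (snd (L!i))" x] i assms(2)
    by (metis (no_types, lifting) image_eqI)
qed


lemma A_eq: "x + y = (0::'a) \<Longrightarrow> y = x"
proof -
  assume "x + y = 0"
  then have "- x = y" by (rule minus_unique)
  then show "y = x" by simp
qed

lemma A_cancel: "x + (x + y) = (y::'a)" by (simp add: add.assoc[symmetric])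
lemma B_cancel: "x + (x + y) = (y::'b)" by (simp add: add.assoc[symmetric])

lemma Tfix: "x \<in> V \<Longrightarrow> P (Q x) = 0 \<Longrightarrow> T x = x"
  using PQ A_eq by metis

definition "imP = P ` W"
definition "X3 = Q ` V \<inter> kerP"

lemma imP_sub: "A.subspace imP"
proof (rule A.subspace_bitI)
  show "0 \<in> imP" unfolding imP_def by (rule image_eqI[of _ _ 0]) simp_all
  fix x y assume "x \<in> imP" "y \<in> imP"
  then obtain u v where uv: "u \<in> W" "v \<in> W" "x = P u" "y = P v" by (auto simp: imP_def)
  then show "x + y \<in> imP" unfolding imP_def by (intro image_eqI[of _ _ "u + v"]) (auto simp: P_add)
qed

lemma X3_sub: "B.subspace X3"
proof (rule B.subspace_bitI)
  show "0 \<in> X3" unfolding X3_def kerP_def by (auto intro: image_eqI[of _ _ 0])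
  fix x y assume "x \<in> X3" "y \<in> X3"
  then obtain u v where uv: "u \<in> V" "v \<in> V" "x = Q u" "y = Q v" "x \<in> W" "y \<in> W" "P x = 0" "P y = 0"
    by (auto simp: X3_def kerP_def)
  then show "x + y \<in> X3" unfolding X3_def kerP_def
    by (auto simp: P_add Q_add intro!: image_eqI[of _ _ "u + v"])
qed

lemma fin_imP: "finite imP" unfolding imP_def using finW by simp
lemma fin_X3: "finite X3" unfolding X3_def using finV by simp
lemma imN_imP: "imN \<subseteq> imP" unfolding imN_def imP_def by (auto simp: PQ[symmetric])
lemma imP_kerQ: "imP \<subseteq> kerQ" unfolding imP_def kerQ_def by auto
lemma X3_kerP: "X3 \<subseteq> kerP" unfolding X3_def by auto

lemma existence: "\<exists>(n::nat) k. zmod_iso sa sb sD sD M (DD n k)"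
proof -
  obtain B1 where B1: "{} \<subseteq> B1" "B1 \<subseteq> imN" "A.independent B1" "A.span B1 = imN" "finite B1"
    by (rule A.basis_extend[OF imN_sub fin_imN empty_subsetI A.independent_empty])
  obtain B2 where B2: "B1 \<subseteq> B2" "B2 \<subseteq> imP" "A.independent B2" "A.span B2 = imP" "finite B2"
    by (rule A.basis_extend[OF imP_sub fin_imP subset_trans[OF B1(2) imN_imP] B1(3)])
  obtain B5 where B5: "B2 \<subseteq> B5" "B5 \<subseteq> kerQ" "A.independent B5" "A.span B5 = kerQ" "finite B5"
    by (rule A.basis_extend[OF kerQ_sub fin_kerQ subset_trans[OF B2(2) imP_kerQ] B2(3)])
  obtain B3 where B3: "{} \<subseteq> B3" "B3 \<subseteq> X3" "B.independent B3" "B.span B3 = X3" "finite B3"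
    by (rule B.basis_extend[OF X3_sub fin_X3 empty_subsetI B.independent_empty])
  obtain B4 where B4: "B3 \<subseteq> B4" "B4 \<subseteq> kerP" "B.independent B4" "B.span B4 = kerP" "finite B4"
    by (rule B.basis_extend[OF kerP_sub fin_kerP subset_trans[OF B3(2) X3_kerP] B3(3)])
  define xx where "xx b = (SOME x. x \<in> V \<and> b = x + T x)" for b
  have xx: "xx b \<in> V \<and> b = xx b + T (xx b)" if "b \<in> B1" for b
  proof -
    have "\<exists>x. x \<in> V \<and> b = x + T x" using that B1(2) by (auto simp: imN_def)
    from someI_ex[OF this] show ?thesis unfolding xx_def .
  qed
  define uu where "uu b = (SOME u. u \<in> W \<and> P u = b)" for b
  have uu: "uu b \<in> W \<and> P (uu b) = b" if "b \<in> B2" for b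
  proof -
    have "\<exists>u. u \<in> W \<and> P u = b" using that B2(2) by (auto simp: imP_def)
    from someI_ex[OF this] show ?thesis unfolding uu_def .
  qed
  define ob where "ob b = (SOME x. x \<in> V \<and> Q x = b)" for b
  have ob: "ob b \<in> V \<and> Q (ob b) = b" if "b \<in> B3" for b
  proof -
    have "\<exists>x. x \<in> V \<and> Q x = b" using that B3(2) by (auto simp: X3_def)
    from someI_ex[OF this] show ?thesis unfolding ob_def .
  qed
  have B3P: "b \<in> W \<and> P b = 0" if "b \<in> B3" for b using that B3(2) X3_kerP by (auto simp: kerP_def)
  have obT: "T (ob b) = ob b" if "b \<in> B3" for b using ob[OF that] B3P[OF that] Tfix by metis
  obtain l1 where l1: "set l1 = B1" "distinct l1" using finite_distinct_list[OF B1(5)] by blast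
  obtain l2 where l2: "set l2 = B2 - B1" "distinct l2" using finite_distinct_list[of "B2 - B1"] B2(5) by blast
  obtain l3 where l3: "set l3 = B3" "distinct l3" using finite_distinct_list[OF B3(5)] by blast
  obtain l4 where l4: "set l4 = B4 - B3" "distinct l4" using finite_distinct_list[of "B4 - B3"] B4(5) by blast
  obtain l5 where l5: "set l5 = B5 - B2" "distinct l5" using finite_distinct_list[of "B5 - B2"] B5(5) by blast
  define L where "L = map (\<lambda>b. (KF, xx b, Q (xx b))) l1 @ map (\<lambda>b. (KH, b, uu b)) l2
     @ map (\<lambda>b. (KHop, ob b, b)) l3 @ map (\<lambda>w. (KSbul, 0, w)) l4 @ map (\<lambda>s. (KSth, s, 0)) l5"
  define n where "n = length L"
  define k where "k = (\<lambda>i. fst (L!i))"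
  define a where "a = (\<lambda>i. fst (snd (L!i)))"
  define bb where "bb = (\<lambda>i. snd (snd (L!i)))"
  have goodL: "good (fst t) (fst (snd t)) (snd (snd t))" if "t \<in> set L" for t
  proof -
    have "t \<in> set (map (\<lambda>b. (KF, xx b, Q (xx b))) l1) \<or> t \<in> set (map (\<lambda>b. (KH, b, uu b)) l2)
      \<or> t \<in> set (map (\<lambda>b. (KHop, ob b, b)) l3) \<or> t \<in> set (map (\<lambda>w. (KSbul, 0, w)) l4)
      \<or> t \<in> set (map (\<lambda>s. (KSth, s, 0)) l5)" using that unfolding L_def by auto
    then show ?thesis
    proof (elim disjE)
      assume "t \<in> set (map (\<lambda>b. (KF, xx b, Q (xx b))) l1)"
      then show ?thesis using l1 xx by (auto simp: good_def)
    next
      assume "t \<in> set (map (\<lambda>b. (KH, b, uu b)) l2)"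
      then show ?thesis using l2 uu by (auto simp: good_def)
    next
      assume "t \<in> set (map (\<lambda>b. (KHop, ob b, b)) l3)"
      then show ?thesis using l3 ob obT B3P by (auto simp: good_def)
    next
      assume "t \<in> set (map (\<lambda>w. (KSbul, 0, w)) l4)"
      then show ?thesis using l4 B4(2) by (auto simp: good_def kerP_def)
    next
      assume "t \<in> set (map (\<lambda>s. (KSth, s, 0)) l5)"
      then obtain s where s: "t = (KSth, s, 0)" "s \<in> B5" using l5 by auto
      then have "s \<in> V" "Q s = 0" using B5(2) by (auto simp: kerQ_def)
      then show ?thesis using s Tfix by (auto simp: good_def)
    qed
  qed
  have good: "good (k i) (a i) (bb i)" if "i < n" for i
    using goodL[of "L!i"] that unfolding k_def a_def bb_def n_def by simp
  let ?G = "PhiF n a ` ThC (DD n k)"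
  let ?H = "PsiF n bb ` BuC (DD n k)"
  have G0: "0 \<in> ?G" by (rule image_eqI[of _ _ 0]) (simp_all add: PhiF_0 DD_0)
  have Gadd: "x + y \<in> ?G" if xy: "x \<in> ?G" "y \<in> ?G" for x y
  proof -
    obtain g h where "g \<in> ThC (DD n k)" "h \<in> ThC (DD n k)" "x = PhiF n a g" "y = PhiF n a h"
      using xy by blast
    then show ?thesis by (intro image_eqI[of _ _ "g + h"]) (simp_all add: PhiF_add DD_add)
  qed
  have H0: "0 \<in> ?H" by (rule image_eqI[of _ _ 0]) (simp_all add: PsiF_0 DD_0)
  have Hadd: "x + y \<in> ?H" if xy: "x \<in> ?H" "y \<in> ?H" for x y
  proof -
    obtain g h where "g \<in> BuC (DD n k)" "h \<in> BuC (DD n k)" "x = PsiF n bb g" "y = PsiF n bb h"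
      using xy by blast
    then show ?thesis by (intro image_eqI[of _ _ "g + h"]) (simp_all add: PsiF_add DD_badd)
  qed
  have gp: "phit (fst (snd t)) x \<in> ?G" if "t \<in> set L" "x \<in> ThC (std (fst t))" for t x
    using gen_phi[OF that] unfolding n_def a_def k_def .
  have gq: "psit (snd (snd t)) x \<in> ?H" if "t \<in> set L" "x \<in> BuC (std (fst t))" for t x
    using gen_psi[OF that] unfolding n_def bb_def k_def .
  have g1: "xx b \<in> ?G" if "b \<in> B1" for b
    using gp[of "(KF, xx b, Q (xx b))" "(1, 0)"] that l1 by (simp add: L_def phit_def)
  have g1': "b \<in> ?G" if "b \<in> B1" for b
    using gp[of "(KF, xx b, Q (xx b))" "(1, 1)"] that l1 xx[OF that] by (simp add: L_def phit_def)
  have g2: "b \<in> ?G" if "b \<in> B2 - B1" for b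
    using gp[of "(KH, b, uu b)" "(1, 0)"] that l2 by (simp add: L_def phit_def)
  have g3: "ob b \<in> ?G" if "b \<in> B3" for b
    using gp[of "(KHop, ob b, b)" "(1, 0)"] that l3 by (simp add: L_def phit_def)
  have g5: "s \<in> ?G" if "s \<in> B5 - B2" for s
    using gp[of "(KSth, s, 0)" "(1, 0)"] that l5 by (simp add: L_def phit_def)
  have h1: "Q (xx b) \<in> ?H" if "b \<in> B1" for b
    using gq[of "(KF, xx b, Q (xx b))" "(1, 0)"] that l1 by (simp add: L_def psit_def)
  have h2: "uu b \<in> ?H" if "b \<in> B2 - B1" for b
    using gq[of "(KH, b, uu b)" "(1, 0)"] that l2 by (simp add: L_def psit_def)
  have h3: "b \<in> ?H" if "b \<in> B3" for b
    using gq[of "(KHop, ob b, b)" "(1, 0)"] that l3 by (simp add: L_def psit_def)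
  have h4: "w \<in> ?H" if "w \<in> B4 - B3" for w
    using gq[of "(KSbul, 0, w)" "(1, 0)"] that l4 by (simp add: L_def psit_def)
  have finB1: "finite C" if "C \<subseteq> B1" for C using that B1(5) finite_subset by blast
  have sV: "V \<subseteq> ?G"
  proof
    fix y assume y: "y \<in> V"
    have "y + T y \<in> A.span B1" using y B1(4) by (auto simp: imN_def)
    then obtain C1 where C1: "C1 \<subseteq> B1" "y + T y = sum id C1" using A.span_sum_subset[OF B1(5)] by blast
    define z where "z = (\<Sum>b\<in>C1. xx b)"
    have zV: "z \<in> V" unfolding z_def by (rule sum_closed) (use xx C1(1) in auto)
    have zG: "z \<in> ?G" unfolding z_def by (rule sum_closed[of ?G]) (use G0 Gadd g1 C1(1) in auto)
    have "T z = (\<Sum>b\<in>C1. T (xx b))" unfolding z_def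
      by (rule sum_additive[where V=V]) (use xx C1(1) T_add in auto)
    then have "z + T z = (\<Sum>b\<in>C1. xx b + T (xx b))" by (simp add: z_def sum.distrib)
    also have "\<dots> = sum id C1"
    proof (rule sum.cong)
      fix b assume "b \<in> C1"
      then have "b = xx b + T (xx b)" using xx C1(1) by blast
      then show "xx b + T (xx b) = id b" by (metis id_apply)
    qed simp
    finally have zz: "z + T z = y + T y" using C1(2) by simp
    define y1 where "y1 = y + z"
    have y1V: "y1 \<in> V" unfolding y1_def using y zV by simp
    have "y1 + T y1 = (y + T y) + (z + T z)" unfolding y1_def using y zV by (simp add: T_add add_ac)
    also have "\<dots> = 0" by (simp add: zz)
    finally have "P (Q y1) = 0" using PQ y1V by simp
    then have "Q y1 \<in> B.span B3" using y1V B3(4) by (auto simp: X3_def kerP_def)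
    then obtain C3 where C3: "C3 \<subseteq> B3" "Q y1 = sum id C3" using B.span_sum_subset[OF B3(5)] by blast
    define w3 where "w3 = (\<Sum>b\<in>C3. ob b)"
    have w3V: "w3 \<in> V" unfolding w3_def by (rule sum_closed) (use ob C3(1) in auto)
    have w3G: "w3 \<in> ?G" unfolding w3_def by (rule sum_closed[of ?G]) (use G0 Gadd g3 C3(1) in auto)
    have "Q w3 = (\<Sum>b\<in>C3. Q (ob b))" unfolding w3_def
      by (rule sum_additive[where V=V]) (use ob C3(1) Q_add in auto)
    also have "\<dots> = sum id C3" by (rule sum.cong) (use ob C3(1) in auto)
    finally have qw3: "Q w3 = Q y1" using C3(2) by simp
    define y2 where "y2 = y1 + w3"
    have y2V: "y2 \<in> V" unfolding y2_def using y1V w3V by simp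
    have "Q y2 = 0" unfolding y2_def using y1V w3V qw3 by (simp add: Q_add)
    then have "y2 \<in> A.span B5" using y2V B5(4) by (simp add: kerQ_def)
    then obtain C5 where C5: "C5 \<subseteq> B5" "y2 = sum id C5" using A.span_sum_subset[OF B5(5)] by blast
    have y2G: "y2 \<in> ?G" unfolding C5(2)
    proof (rule sum_closed[of ?G])
      fix c assume c: "c \<in> C5"
      show "id c \<in> ?G"
      proof (cases "c \<in> B1")
        case True then show ?thesis using g1' by simp
      next
        case False
        show ?thesis
        proof (cases "c \<in> B2")
          case True then show ?thesis using g2 False by simp
        next
          case False2: False
          then show ?thesis using g5 c C5(1) by auto
        qed
      qed
    qed (use G0 Gadd in auto)
    have "y = y2 + (w3 + z)" unfolding y2_def y1_def by (simp add: add.assoc A_cancel)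
    then show "y \<in> ?G" using y2G w3G zG Gadd by metis
  qed
  define pre where "pre c = (if c \<in> B1 then Q (xx c) else uu c)" for c
  have pre: "pre c \<in> W \<and> P (pre c) = c" if "c \<in> B2" for c
  proof (cases "c \<in> B1")
    case True
    then show ?thesis using xx[OF True] PQ[of "xx c"] unfolding pre_def by simp
  next
    case False
    then show ?thesis using uu[OF that] unfolding pre_def by simp
  qed
  have preH: "pre c \<in> ?H" if "c \<in> B2" for c
  proof (cases "c \<in> B1")
    case True
    then show ?thesis using h1 unfolding pre_def by simp
  next
    case False
    then show ?thesis using h2 that unfolding pre_def by simp
  qed
  have sW: "W \<subseteq> ?H"
  proof
    fix w assume w: "w \<in> W"
    have "P w \<in> A.span B2" using w B2(4) by (auto simp: imP_def)
    then obtain C2 where C2: "C2 \<subseteq> B2" "P w = sum id C2" using A.span_sum_subset[OF B2(5)] by blast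
    define w' where "w' = (\<Sum>c\<in>C2. pre c)"
    have w'W: "w' \<in> W" unfolding w'_def by (rule sum_closed) (use pre C2(1) in auto)
    have w'H: "w' \<in> ?H" unfolding w'_def by (rule sum_closed[of ?H]) (use H0 Hadd preH C2(1) in auto)
    have "P w' = (\<Sum>c\<in>C2. P (pre c))" unfolding w'_def
      by (rule sum_additive[where V=W]) (use pre C2(1) P_add in auto)
    also have "\<dots> = sum id C2" by (rule sum.cong) (use pre C2(1) in auto)
    finally have pw': "P w' = P w" using C2(2) by simp
    have "P (w + w') = 0" using w w'W pw' by (simp add: P_add)
    then have "w + w' \<in> B.span B4" using w w'W B4(4) by (simp add: kerP_def)
    then obtain C4 where C4: "C4 \<subseteq> B4" "w + w' = sum id C4" using B.span_sum_subset[OF B4(5)] by blast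
    have ww: "w + w' \<in> ?H" unfolding C4(2)
    proof (rule sum_closed[of ?H])
      fix c assume c: "c \<in> C4"
      show "id c \<in> ?H"
      proof (cases "c \<in> B3")
        case True then show ?thesis using h3 by simp
      next
        case False then show ?thesis using h4 c C4(1) by auto
      qed
    qed (use H0 Hadd in auto)
    have "w = (w + w') + w'" by (simp add: add.assoc)
    then show "w \<in> ?H" using ww w'H Hadd by metis
  qed
  have cntL: "cnt k n K = length (filter (\<lambda>t. fst t = K) L)" for K
    unfolding cnt_def k_def n_def by (simp add: length_filter_conv_card)
  have cF: "cnt k n KF = card B1"
    using distinct_card[OF l1(2), unfolded l1(1)] by (simp add: cntL L_def filter_map comp_def)
  have cH: "cnt k n KH = card (B2 - B1)"
    using distinct_card[OF l2(2), unfolded l2(1)] by (simp add: cntL L_def filter_map comp_def)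
  have cHop: "cnt k n KHop = card B3"
    using distinct_card[OF l3(2), unfolded l3(1)] by (simp add: cntL L_def filter_map comp_def)
  have cSb: "cnt k n KSbul = card (B4 - B3)"
    using distinct_card[OF l4(2), unfolded l4(1)] by (simp add: cntL L_def filter_map comp_def)
  have cSt: "cnt k n KSth = card (B5 - B2)"
    using distinct_card[OF l5(2), unfolded l5(1)] by (simp add: cntL L_def filter_map comp_def)
  have fin: "finite {..<n}" by simp
  have cDT: "card (ThC (DD n k)) = 2 ^ (\<Sum>i<n. cT (k i))"
    by (simp add: dsum_ThC card_dset[OF fin] card_T prod_pow)
  have cDB: "card (BuC (DD n k)) = 2 ^ (\<Sum>i<n. cB (k i))"
    by (simp add: dsum_BuC card_dset[OF fin] card_B prod_pow)
  have e21: "card B2 = card B1 + card (B2 - B1)"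
    using card_Diff_subset[OF B1(5) B2(1)] card_mono[OF B2(5) B2(1)] by simp
  have e52: "card B5 = card B2 + card (B5 - B2)"
    using card_Diff_subset[OF B2(5) B5(1)] card_mono[OF B5(5) B5(1)] by simp
  have e43: "card B4 = card B3 + card (B4 - B3)"
    using card_Diff_subset[OF B3(5) B4(1)] card_mono[OF B4(5) B4(1)] by simp
  have c1: "card V = card (Q ` V) * card kerQ"
    unfolding kerQ_def by (rule card_fiber[OF finV]) (simp_all add: Q_add)
  have QVW: "Q ` V \<subseteq> W" by auto
  have c2: "card (Q ` V) = card (P ` Q ` V) * card {y \<in> Q ` V. P y = 0}"
  proof (rule card_fiber)
    show "finite (Q ` V)" using finV by simp
    show "x + y \<in> Q ` V" if "x \<in> Q ` V" "y \<in> Q ` V" for x y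
      using that by (auto simp: Q_add[symmetric] intro!: image_eqI)
    show "x + x = 0" if "x \<in> Q ` V" for x by simp
    show "P (x + y) = P x + P y" if "x \<in> Q ` V" "y \<in> Q ` V" for x y
      using that QVW by (auto simp: P_add)
  qed
  have c3: "P ` Q ` V = imN" unfolding imN_def image_image by (rule image_cong) (auto simp: PQ)
  have c4: "{y \<in> Q ` V. P y = 0} = X3" unfolding X3_def kerP_def using QVW by auto
  have ckQ: "card kerQ = 2 ^ card B5" using A.card_span[OF B5(5) B5(3)] B5(4) by simp
  have cimN: "card imN = 2 ^ card B1" using A.card_span[OF B1(5) B1(3)] B1(4) by simp
  have cX3: "card X3 = 2 ^ card B3" using B.card_span[OF B3(5) B3(3)] B3(4) by simp
  have cimP: "card imP = 2 ^ card B2" using A.card_span[OF B2(5) B2(3)] B2(4) by simp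
  have ckP: "card kerP = 2 ^ card B4" using B.card_span[OF B4(5) B4(3)] B4(4) by simp
  have cVV: "card V = 2 ^ (card B5 + card B1 + card B3)"
    using c1 c2 c3 c4 ckQ cimN cX3 by (simp add: power_add)
  have cW1: "card W = card (P ` W) * card kerP"
    unfolding kerP_def by (rule card_fiber[OF finW]) (simp_all add: P_add)
  have cWW: "card W = 2 ^ (card B2 + card B4)"
    using cW1 cimP ckP by (simp add: imP_def power_add)
  have cardV: "card V = card (ThC (DD n k))"
    using cVV cDT sum_kinds[of cT k n] cF cH cHop cSt e21 e52 by simp
  have cardW: "card W = card (BuC (DD n k))"
    using cWW cDB sum_kinds[of cB k n] cF cH cHop cSb e21 e43 by simp
  have "zmod_iso sa sb sD sD M (DD n k)" by (rule iso_from_family[OF _ sV sW cardV cardW]) (rule good)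
  then show ?thesis by (intro exI[of _ n] exI[of _ k])
qed

end


theorem proposition3p9:
  fixes sa :: "bit \<Rightarrow> 'a::ab_group_add \<Rightarrow> 'a"
    and sb :: "bit \<Rightarrow> 'b::ab_group_add \<Rightarrow> 'b"
    and M :: "('a, 'b) zmod"
  assumes "is_zmod sa sb M" and "fin_gen sa sb M"
  defines "f \<equiv> int (vector_space.dim sa ((\<lambda>x. x + tm M x) ` ThC M))"
    and "dTh \<equiv> int (vector_space.dim sa (ThC M))"
    and "dBu \<equiv> int (vector_space.dim sb (BuC M))"
    and "kdn \<equiv> int (vector_space.dim sa {x \<in> ThC M. pdn M x = 0})"
    and "kup \<equiv> int (vector_space.dim sb {y \<in> BuC M. pup M y = 0})"
  shows "(\<exists>(n::nat) k. zmod_iso sa sb sD sD M (dsum {..<n} (\<lambda>i. std (k i)))) \<and>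
         (\<forall>(n::nat) k. zmod_iso sa sb sD sD M (dsum {..<n} (\<lambda>i. std (k i))) \<longrightarrow>
            int (card {i. i < n \<and> k i = KF}) = f \<and>
            int (card {i. i < n \<and> k i = KHop}) = dTh - f - kdn \<and>
            int (card {i. i < n \<and> k i = KH}) = dBu - kup - f \<and>
            int (card {i. i < n \<and> k i = KSbul}) = kup - dTh + f + kdn \<and>
            int (card {i. i < n \<and> k i = KSth}) = kdn - dBu + kup)"
proof -
  have vs: "vector_space sa" "vector_space sb" using assms(1) by (auto simp: is_zmod_def)
  have z: "zm sa sb M" unfolding zm_def zm_axioms_def bvs_def using vs assms(1,2) by auto
  interpret zm sa sb M by (rule z)
  show ?thesis
  proof (rule conjI, rule existence, intro allI impI)
    fix n :: nat and k
    assume iso: "zmod_iso sa sb sD sD M (dsum {..<n} (\<lambda>i. std (k i)))"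
    note u = unique[OF iso]
    have eF: "f = int (cnt k n KF)" using u(3) unfolding f_def imN_def by simp
    have eT: "dTh = int (cnt k n KH) + int (cnt k n KHop) + 2 * int (cnt k n KF) + int (cnt k n KSth)"
      using u(1) unfolding dTh_def by simp
    have eB: "dBu = int (cnt k n KH) + int (cnt k n KHop) + int (cnt k n KF) + int (cnt k n KSbul)"
      using u(2) unfolding dBu_def by simp
    have eKd: "kdn = int (cnt k n KH) + int (cnt k n KF) + int (cnt k n KSth)"
      using u(4) unfolding kdn_def kerQ_def by simp
    have eKu: "kup = int (cnt k n KHop) + int (cnt k n KSbul)"
      using u(5) unfolding kup_def kerP_def by simp
    show "int (card {i. i < n \<and> k i = KF}) = f \<and>
            int (card {i. i < n \<and> k i = KHop}) = dTh - f - kdn \<and>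
            int (card {i. i < n \<and> k i = KH}) = dBu - kup - f \<and>
            int (card {i. i < n \<and> k i = KSbul}) = kup - dTh + f + kdn \<and>
            int (card {i. i < n \<and> k i = KSth}) = kdn - dBu + kup"
      using eF eT eB eKd eKu unfolding cnt_def by linarith
  qed
qed

end
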